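(* Let $\omega$ be a primitive third root of unity, $S=\mathbb{C}\langle x,y,z\rangle/(x^2,y^2,z^2)$, and for $t\in\mathbb{C}^*$ let $T_t$ be the quotient of $S$ by the two-sided ideal generated by $(zxy+\omega xyz+\omega^2 yzx)+t(yxz+\omega zyx+\omega^2 xzy)$ and $(zxy+\omega^2 xyz+\omega yzx)+t(yxz+\omega^2 zyx+\omega xzy)$; let $M_t=T_t/(g_t)$ with $g_t=(zxy+xyz+yzx)+t(yxz+zyx+xzy)$. Then for $t\in\mathbb{C}^*$, $M_t$ has no nonzero homogeneous central elements of odd degree.
   Context: Grading: $\deg x=\deg y=\deg z=1$. *)

theory Defs
  imports Complex_Main
begin

text \<open>The free algebra C<x,y,z>: elements are finitely supported functions from words
  over the alphabet {x,y,z} to complex coefficients; product is concatenation convolution.\<close>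

datatype gen = X | Y | Z

type_synonym ncpoly = "gen list \<Rightarrow> complex"

definition fin_supp :: "ncpoly \<Rightarrow> bool" where
  "fin_supp p \<longleftrightarrow> finite {w. p w \<noteq> 0}"

definition ncadd :: "ncpoly \<Rightarrow> ncpoly \<Rightarrow> ncpoly" where
  "ncadd p q = (\<lambda>w. p w + q w)"

definition ncdiff :: "ncpoly \<Rightarrow> ncpoly \<Rightarrow> ncpoly" where
  "ncdiff p q = (\<lambda>w. p w - q w)"

definition ncmul :: "ncpoly \<Rightarrow> ncpoly \<Rightarrow> ncpoly" where
  "ncmul p q = (\<lambda>w. \<Sum>(u, v) \<in> {(u, v). u @ v = w}. p u * q v)"

definition lc :: "(complex \<times> gen list) list \<Rightarrow> ncpoly" where
  "lc l = (\<lambda>w. sum_list (map fst (filter (\<lambda>(c, u). u = w) l)))"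

inductive_set ideal_gen :: "ncpoly set \<Rightarrow> ncpoly set" for G where
  zero: "(\<lambda>_. 0) \<in> ideal_gen G"
| gen: "\<lbrakk>g \<in> G; fin_supp a; fin_supp b\<rbrakk> \<Longrightarrow> ncmul (ncmul a g) b \<in> ideal_gen G"
| add: "\<lbrakk>p \<in> ideal_gen G; q \<in> ideal_gen G\<rbrakk> \<Longrightarrow> ncadd p q \<in> ideal_gen G"

definition homogeneous :: "nat \<Rightarrow> ncpoly \<Rightarrow> bool" where
  "homogeneous d p \<longleftrightarrow> fin_supp p \<and> (\<forall>w. p w \<noteq> 0 \<longrightarrow> length w = d)"

text \<open>Relations defining M_t = T_t/(g_t), T_t = S/(r1,r2), S = C<x,y,z>/(x^2,y^2,z^2).\<close>
definition M_rels :: "complex \<Rightarrow> complex \<Rightarrow> ncpoly set" where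
  "M_rels \<omega> t = {
     lc [(1, [X, X])], lc [(1, [Y, Y])], lc [(1, [Z, Z])],
     lc [(1, [Z,X,Y]), (\<omega>, [X,Y,Z]), (\<omega>^2, [Y,Z,X]),
         (t, [Y,X,Z]), (t * \<omega>, [Z,Y,X]), (t * \<omega>^2, [X,Z,Y])],
     lc [(1, [Z,X,Y]), (\<omega>^2, [X,Y,Z]), (\<omega>, [Y,Z,X]),
         (t, [Y,X,Z]), (t * \<omega>^2, [Z,Y,X]), (t * \<omega>, [X,Z,Y])],
     lc [(1, [Z,X,Y]), (1, [X,Y,Z]), (1, [Y,Z,X]),
         (t, [Y,X,Z]), (t, [Z,Y,X]), (t, [X,Z,Y])] }"

definition M_ideal :: "complex \<Rightarrow> complex \<Rightarrow> ncpoly set" where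
  "M_ideal \<omega> t = ideal_gen (M_rels \<omega> t)"

definition central_mod :: "ncpoly set \<Rightarrow> ncpoly \<Rightarrow> bool" where
  "central_mod I f \<longleftrightarrow> (\<forall>a. fin_supp a \<longrightarrow> ncdiff (ncmul f a) (ncmul a f) \<in> I)"

end

theory Submission
  imports Defs
begin

fun sucg :: "gen \<Rightarrow> gen" where "sucg X = Y" | "sucg Y = Z" | "sucg Z = X"
fun predg :: "gen \<Rightarrow> gen" where "predg X = Z" | "predg Y = X" | "predg Z = Y"

definition dlt :: "gen list \<Rightarrow> ncpoly" where "dlt u = (\<lambda>x. if x = u then 1 else 0)"
definition supp :: "ncpoly \<Rightarrow> gen list set" where "supp p = {w. p w \<noteq> 0}"
definition Phi :: "(gen list \<Rightarrow> complex) \<Rightarrow> ncpoly \<Rightarrow> complex" where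
  "Phi l p = (\<Sum>w\<in>supp p. l w * p w)"

lemma splits_eq: "{(u, v). u @ v = w} = (\<lambda>i. (take i w, drop i w)) ` {0..length w}"
proof (rule set_eqI, rule iffI)
  fix x assume "x \<in> {(u, v). u @ v = w}"
  then obtain u v where x: "x = (u,v)" "u @ v = w" by auto
  then show "x \<in> (\<lambda>i. (take i w, drop i w)) ` {0..length w}"
    by (intro image_eqI[where x="length u"]) auto
qed auto

lemma finite_splits: "finite {(u, v). u @ v = w}"
  by (simp add: splits_eq)

lemma Phi_superset: "finite S \<Longrightarrow> supp p \<subseteq> S \<Longrightarrow> Phi l p = (\<Sum>w\<in>S. l w * p w)"
  unfolding Phi_def by (rule sum.mono_neutral_left) (auto simp: supp_def)

lemma fin_supp_supp: "fin_supp p \<longleftrightarrow> finite (supp p)"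
  by (simp add: fin_supp_def supp_def)

lemma supp_ncmul: "supp (ncmul p q) \<subseteq> (\<lambda>(u,v). u @ v) ` (supp p \<times> supp q)"
proof
  fix w assume "w \<in> supp (ncmul p q)"
  then have "(\<Sum>(u, v) \<in> {(u, v). u @ v = w}. p u * q v) \<noteq> 0" by (simp add: supp_def ncmul_def)
  then obtain x where "x \<in> {(u, v). u @ v = w}" "(\<lambda>(u,v). p u * q v) x \<noteq> 0"
    by (rule sum.not_neutral_contains_not_neutral)
  then obtain u v where "u @ v = w" "p u * q v \<noteq> 0" by auto
  then show "w \<in> (\<lambda>(u,v). u @ v) ` (supp p \<times> supp q)"
    by (auto simp: supp_def image_iff intro!: bexI[where x="(u,v)"])
qed

lemma fin_supp_ncmul: "fin_supp p \<Longrightarrow> fin_supp q \<Longrightarrow> fin_supp (ncmul p q)"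
  unfolding fin_supp_supp using supp_ncmul finite_subset by blast

lemma Phi_ncmul:
  assumes "fin_supp p" "fin_supp q"
  shows "Phi l (ncmul p q) = (\<Sum>(u,v)\<in>supp p \<times> supp q. l (u@v) * p u * q v)"
proof -
  let ?A = "supp p \<times> supp q"
  let ?S = "(\<lambda>(u,v). u @ v) ` ?A"
  have fA: "finite ?A" using assms by (simp add: fin_supp_supp)
  have fS: "finite ?S" using fA by simp
  have "Phi l (ncmul p q) = (\<Sum>w\<in>?S. l w * ncmul p q w)"
    by (rule Phi_superset[OF fS supp_ncmul])
  also have "\<dots> = (\<Sum>w\<in>?S. (\<Sum>x\<in>{x\<in>?A. (\<lambda>(u,v). u@v) x = w}. (\<lambda>(u,v). l (u@v) * p u * q v) x))"
  proof (rule sum.cong[OF refl])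
    fix w assume "w \<in> ?S"
    have "ncmul p q w = (\<Sum>(u, v) \<in> {(u, v). u @ v = w}. p u * q v)" by (simp add: ncmul_def)
    also have "\<dots> = (\<Sum>x\<in>{x\<in>?A. (\<lambda>(u,v). u@v) x = w}. (\<lambda>(u,v). p u * q v) x)"
      by (rule sum.mono_neutral_right) (auto simp: finite_splits supp_def)
    finally show "l w * ncmul p q w = (\<Sum>x\<in>{x\<in>?A. (\<lambda>(u,v). u@v) x = w}. (\<lambda>(u,v). l (u@v) * p u * q v) x)"
      by (auto simp: sum_distrib_left case_prod_beta mult.assoc intro!: sum.cong)
  qed
  also have "\<dots> = (\<Sum>x\<in>?A. (\<lambda>(u,v). l (u@v) * p u * q v) x)"
    by (rule sum.group[OF fA fS]) auto
  finally show ?thesis by simp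
qed

lemma Phi_ncmul_left:
  assumes "fin_supp p" "fin_supp q"
  shows "Phi l (ncmul p q) = (\<Sum>u\<in>supp p. p u * Phi (\<lambda>v. l (u@v)) q)"
  apply (subst Phi_ncmul[OF assms])
  unfolding Phi_def sum.cartesian_product[symmetric]
  by (simp add: sum_distrib_left mult_ac)

lemma Phi_ncmul_right:
  assumes "fin_supp p" "fin_supp q"
  shows "Phi l (ncmul p q) = (\<Sum>v\<in>supp q. q v * Phi (\<lambda>u. l (u@v)) p)"
  apply (subst Phi_ncmul[OF assms])
  unfolding Phi_def sum.cartesian_product[symmetric]
  by (subst sum.swap) (simp add: sum_distrib_left mult_ac)

lemma Phi_add: "fin_supp p \<Longrightarrow> fin_supp q \<Longrightarrow> Phi l (ncadd p q) = Phi l p + Phi l q"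
proof -
  assume a: "fin_supp p" "fin_supp q"
  let ?S = "supp p \<union> supp q"
  have f: "finite ?S" using a by (simp add: fin_supp_supp)
  have "Phi l (ncadd p q) = (\<Sum>w\<in>?S. l w * ncadd p q w)"
    by (rule Phi_superset[OF f]) (auto simp: supp_def ncadd_def)
  also have "\<dots> = (\<Sum>w\<in>?S. l w * p w) + (\<Sum>w\<in>?S. l w * q w)"
    by (simp add: ncadd_def distrib_left sum.distrib)
  also have "\<dots> = Phi l p + Phi l q"
    using Phi_superset[OF f, of p l] Phi_superset[OF f, of q l] by auto
  finally show ?thesis .
qed

lemma Phi_zero: "Phi l (\<lambda>_. 0) = 0"
  by (simp add: Phi_def supp_def)

lemma fin_supp_ncadd: "fin_supp p \<Longrightarrow> fin_supp q \<Longrightarrow> fin_supp (ncadd p q)"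
  unfolding fin_supp_supp
  by (rule finite_subset[of _ "supp p \<union> supp q"]) (auto simp: supp_def ncadd_def)

lemma fin_supp_lc: "fin_supp (lc xs)"
proof -
  have "supp (lc xs) \<subseteq> set (map snd xs)"
  proof
    fix w assume "w \<in> supp (lc xs)"
    then have "filter (\<lambda>(c, u). u = w) xs \<noteq> []" by (auto simp: supp_def lc_def)
    then show "w \<in> set (map snd xs)" by (force simp: filter_empty_conv image_iff)
  qed
  then show ?thesis unfolding fin_supp_supp by (rule finite_subset) simp
qed

lemma lc_Cons: "lc (x # xs) = ncadd (lc [x]) (lc xs)"
  by (auto simp: lc_def ncadd_def fun_eq_iff split: prod.splits)

lemma Phi_single: "Phi l (lc [(c, u)]) = c * l u"
proof -
  have "Phi l (lc [(c, u)]) = (\<Sum>w\<in>{u}. l w * lc [(c, u)] w)"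
    by (rule Phi_superset) (auto simp: supp_def lc_def)
  then show ?thesis by (simp add: lc_def)
qed

lemma Phi_lc: "Phi l (lc xs) = sum_list (map (\<lambda>(c, w). c * l w) xs)"
proof (induction xs)
  case Nil
  have "lc [] = (\<lambda>_. 0)" by (simp add: lc_def fun_eq_iff)
  then show ?case by (simp add: Phi_zero)
next
  case (Cons x xs)
  obtain c u where x: "x = (c, u)" by force
  show ?case
    by (subst lc_Cons) (simp add: Phi_add fin_supp_lc Cons x Phi_single)
qed

definition good :: "complex \<Rightarrow> (gen list \<Rightarrow> complex) \<Rightarrow> bool" where
  "good t m \<longleftrightarrow> (\<forall>a. m [a,a] = 0) \<and> m [Z,X,Y] + t * m [Y,X,Z] = 0 \<and>
     m [X,Y,Z] + t * m [Z,Y,X] = 0 \<and> m [Y,Z,X] + t * m [X,Z,Y] = 0"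

lemma omega_sum: "\<omega> ^ 3 = 1 \<Longrightarrow> \<omega> \<noteq> 1 \<Longrightarrow> 1 + \<omega> + \<omega>^2 = (0::complex)"
proof -
  assume a: "\<omega> ^ 3 = 1" "\<omega> \<noteq> 1"
  have "(\<omega> - 1) * (1 + \<omega> + \<omega>^2) = \<omega>^3 - 1" by (simp add: algebra_simps power2_eq_square power3_eq_cube)
  then have "(\<omega> - 1) * (1 + \<omega> + \<omega>^2) = 0" using a by simp
  then show ?thesis using a by simp
qed

lemma good_rels:
  assumes "\<omega> ^ 3 = 1" "\<omega> \<noteq> 1" "good t m" "g \<in> M_rels \<omega> t"
  shows "Phi m g = 0"
proof -
  have o: "1 + \<omega> + \<omega>^2 = 0" using omega_sum assms by blast
  have "\<omega>^2 = (1 + \<omega> + \<omega>^2) - 1 - \<omega>" by simp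
  then have o2: "\<omega>^2 = - 1 - \<omega>" using o by simp
  have sq: "\<And>a. m [a,a] = 0" and r1: "m [Z,X,Y] = - t * m [Y,X,Z]" and r2: "m [X,Y,Z] = - t * m [Z,Y,X]"
    and r3: "m [Y,Z,X] = - t * m [X,Z,Y]"
    using assms(3) unfolding good_def by (auto simp: eq_neg_iff_add_eq_0 algebra_simps)
  from assms(4) show ?thesis
    unfolding M_rels_def
    by (auto simp: Phi_lc sq r1 r2 r3 o2 algebra_simps)
qed

lemma Phi_ideal:
  assumes "\<omega> ^ 3 = 1" "\<omega> \<noteq> 1" and gd: "\<And>u v. good t (\<lambda>x. l (u @ x @ v))"
    and "p \<in> ideal_gen (M_rels \<omega> t)"
  shows "Phi l p = 0 \<and> fin_supp p"
  using assms(4)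
proof (induction p rule: ideal_gen.induct)
  case zero
  then show ?case by (simp add: Phi_zero fin_supp_def)
next
  case (gen g a b)
  have fg: "fin_supp g" using gen(1) by (auto simp: M_rels_def fin_supp_lc)
  have fag: "fin_supp (ncmul a g)" using fin_supp_ncmul gen fg by blast
  have "Phi l (ncmul (ncmul a g) b) = (\<Sum>v\<in>supp b. b v * Phi (\<lambda>w. l (w@v)) (ncmul a g))"
    by (rule Phi_ncmul_right[OF fag gen(3)])
  also have "\<dots> = (\<Sum>v\<in>supp b. b v * (\<Sum>u\<in>supp a. a u * Phi (\<lambda>x. l (u @ x @ v)) g))"
    by (simp add: Phi_ncmul_left[OF gen(2) fg])
  also have "\<dots> = 0"
    using good_rels[OF assms(1,2) gd gen(1)] by simp
  finally show ?case using fag gen(3) fin_supp_ncmul by blast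
next
  case (add p q)
  then show ?case by (simp add: Phi_add fin_supp_ncadd)
qed


fun pat :: "gen \<Rightarrow> bool \<Rightarrow> gen list \<Rightarrow> bool" where
  "pat b q [] = True"
| "pat b q (x # xs) = (((x = b) = q) \<and> pat b (\<not> q) xs)"

fun invs :: "gen \<Rightarrow> gen \<Rightarrow> gen list \<Rightarrow> nat" where
  "invs s p [] = 0"
| "invs s p (x # xs) = (if x = s then count_list xs p else 0) + invs s p xs"

fun rep :: "gen \<Rightarrow> bool \<Rightarrow> nat \<Rightarrow> nat \<Rightarrow> gen list" where
  "rep b q k 0 = []"
| "rep b q k (Suc n) = (if q then b # rep b False k n
     else if k > 0 then predg b # rep b True (k - 1) n else sucg b # rep b True 0 n)"

definition lam :: "complex \<Rightarrow> gen \<Rightarrow> bool \<Rightarrow> nat \<Rightarrow> gen list \<Rightarrow> complex" where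
  "lam t b q k w = (if pat b q w \<and> count_list w (predg b) = k
     then (- 1 / t) ^ invs (sucg b) (predg b) w else 0)"

lemma pat_append: "pat b q (u @ v) \<longleftrightarrow> pat b q u \<and> pat b (if even (length u) then q else \<not> q) v"
  by (induction u arbitrary: q) auto

lemma pat_snoc: "pat b q (u @ [x]) \<longleftrightarrow> pat b q u \<and> ((x = b) = (even (length u) = q))"
  by (auto simp: pat_append)

lemma pat_nth: "pat b q w \<longleftrightarrow> (\<forall>i<length w. (w ! i = b) = (even i = q))"
proof (induction w arbitrary: q)
  case Nil then show ?case by simp
next
  case (Cons x xs)
  show ?case
  proof
    assume "pat b q (x # xs)"
    then show "\<forall>i<length (x # xs). ((x # xs) ! i = b) = (even i = q)"
      using Cons by (auto simp: nth_Cons split: nat.splits)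
  next
    assume a: "\<forall>i<length (x # xs). ((x # xs) ! i = b) = (even i = q)"
    have "(x = b) = q" using a[rule_format, of 0] by simp
    moreover have "\<forall>i<length xs. (xs ! i = b) = (even i = (\<not> q))"
    proof (intro allI impI)
      fix i assume "i < length xs"
      then show "(xs ! i = b) = (even i = (\<not> q))" using a[rule_format, of "Suc i"] by auto
    qed
    ultimately show "pat b q (x # xs)" using Cons by simp
  qed
qed

lemma invs_append: "invs s p (u @ v) = invs s p u + count_list u s * count_list v p + invs s p v"
  by (induction u) (auto simp: algebra_simps)

lemma gen_cases3: "x = X \<or> x = Y \<or> x = Z"
  by (cases x) auto

lemma lam_good:
  assumes "t \<noteq> 0"
  shows "good t (\<lambda>x. lam t b q k (u @ x @ v))"
  unfolding good_def
  using assms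
  by (cases b) (auto simp: lam_def pat_append invs_append power_add field_simps)


lemma ncmul_scale_left: "ncmul (\<lambda>w. c * p w) q = (\<lambda>w. c * ncmul p q w)"
  by (simp add: ncmul_def sum_distrib_left case_prod_beta mult.assoc)

lemma fin_supp_scale: "fin_supp p \<Longrightarrow> fin_supp (\<lambda>w. c * p w)"
  unfolding fin_supp_def by (rule finite_subset[of _ "{w. p w \<noteq> 0}"]) auto

lemma ideal_scale: "p \<in> ideal_gen G \<Longrightarrow> (\<lambda>w. c * p w) \<in> ideal_gen G"
proof (induction p rule: ideal_gen.induct)
  case zero
  then show ?case using ideal_gen.zero by simp
next
  case (gen g a b)
  have "(\<lambda>w. c * ncmul (ncmul a g) b w) = ncmul (ncmul (\<lambda>w. c * a w) g) b"
    by (simp add: ncmul_scale_left)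
  then show ?case using ideal_gen.gen[OF gen(1) fin_supp_scale[OF gen(2)] gen(3)] by simp
next
  case (add p q)
  have "(\<lambda>w. c * ncadd p q w) = ncadd (\<lambda>w. c * p w) (\<lambda>w. c * q w)"
    by (simp add: ncadd_def distrib_left)
  then show ?case using ideal_gen.add[OF add(3,4)] by simp
qed

lemma ideal_lin: "P \<in> ideal_gen G \<Longrightarrow> Q \<in> ideal_gen G \<Longrightarrow> (\<lambda>w. c1 * P w + c2 * Q w) \<in> ideal_gen G"
  using ideal_gen.add[OF ideal_scale[of P G c1] ideal_scale[of Q G c2]] by (simp add: ncadd_def)

lemma ideal_cong: "P \<in> ideal_gen G \<Longrightarrow> (\<And>w. Q w = P w) \<Longrightarrow> Q \<in> ideal_gen G"
proof -
  assume "P \<in> ideal_gen G" "\<And>w. Q w = P w"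
  then show ?thesis by (metis ext)
qed

lemma ideal_sum: "finite S \<Longrightarrow> (\<And>x. x \<in> S \<Longrightarrow> F x \<in> ideal_gen G) \<Longrightarrow> (\<lambda>w. \<Sum>x\<in>S. F x w) \<in> ideal_gen G"
proof (induction S rule: finite_induct)
  case empty
  then show ?case using ideal_gen.zero by simp
next
  case (insert x S)
  have "(\<lambda>w. \<Sum>y\<in>insert x S. F y w) = ncadd (F x) (\<lambda>w. \<Sum>y\<in>S. F y w)"
    using insert(1,2) by (simp add: ncadd_def)
  then show ?case using ideal_gen.add[of "F x" G "\<lambda>w. \<Sum>y\<in>S. F y w"] insert by simp
qed

definition sw :: "gen list \<Rightarrow> ncpoly \<Rightarrow> gen list \<Rightarrow> ncpoly" where
  "sw u g v = (\<lambda>x. if \<exists>m. x = u @ m @ v then g (drop (length u) (take (length x - length v) x)) else 0)"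

lemma ncmul_dlt_left:
  "ncmul (\<lambda>x. if x = u then c else 0) g = (\<lambda>x. if \<exists>m. x = u @ m then c * g (drop (length u) x) else 0)"
proof (rule ext)
  fix x
  have "ncmul (\<lambda>x. if x = u then c else 0) g x
     = (\<Sum>y\<in>{(a,m). a @ m = x}. if y = (u, drop (length u) x) then c * g (snd y) else 0)"
    unfolding ncmul_def by (rule sum.cong) (auto split: if_splits)
  also have "\<dots> = (if (u, drop (length u) x) \<in> {(a,m). a @ m = x} then c * g (drop (length u) x) else 0)"
    by (simp add: sum.delta[OF finite_splits])
  also have "\<dots> = (if \<exists>m. x = u @ m then c * g (drop (length u) x) else 0)"
  proof -
    have "(u @ drop (length u) x = x) = (\<exists>m. x = u @ m)" by (metis append_eq_conv_conj)
    then show ?thesis by simp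
  qed
  finally show "ncmul (\<lambda>x. if x = u then c else 0) g x = (if \<exists>m. x = u @ m then c * g (drop (length u) x) else 0)" .
qed

lemma ncmul_dlt_right:
  "ncmul g (dlt v) = (\<lambda>x. if \<exists>m. x = m @ v then g (take (length x - length v) x) else 0)"
proof (rule ext)
  fix x
  have "ncmul g (dlt v) x
     = (\<Sum>y\<in>{(a,m). a @ m = x}. if y = (take (length x - length v) x, v) then g (fst y) else 0)"
    unfolding ncmul_def dlt_def by (rule sum.cong) (auto split: if_splits)
  also have "\<dots> = (if (take (length x - length v) x, v) \<in> {(a,m). a @ m = x} then g (take (length x - length v) x) else 0)"
    by (simp add: sum.delta[OF finite_splits])
  also have "\<dots> = (if \<exists>m. x = m @ v then g (take (length x - length v) x) else 0)"
  proof -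
    have "(take (length x - length v) x @ v = x) = (\<exists>m. x = m @ v)" by (metis append_take_drop_id same_append_eq length_append diff_add_inverse2 take_all_iff order_refl append_eq_conv_conj)
    then show ?thesis by simp
  qed
  finally show "ncmul g (dlt v) x = (if \<exists>m. x = m @ v then g (take (length x - length v) x) else 0)" .
qed

lemma sandwich_eq:
  "ncmul (ncmul (\<lambda>x. if x = u then c else 0) g) (dlt v) = (\<lambda>x. c * sw u g v x)"
proof (rule ext)
  fix x
  show "ncmul (ncmul (\<lambda>x. if x = u then c else 0) g) (dlt v) x = c * sw u g v x"
  proof (cases "\<exists>m. x = u @ m @ v")
    case True
    then obtain m where m: "x = u @ m @ v" by blast
    then show ?thesis by (simp add: ncmul_dlt_left ncmul_dlt_right sw_def)
  next
    case False
    then show ?thesis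
      by (auto simp: ncmul_dlt_left ncmul_dlt_right sw_def)
  qed
qed

lemma fin_supp_delta: "fin_supp (\<lambda>x. if x = u then c else 0)"
  unfolding fin_supp_def by (rule finite_subset[of _ "{u}"]) auto

lemma fin_supp_dlt: "fin_supp (dlt u)"
  using fin_supp_delta[of u 1] by (simp add: dlt_def)

lemma sandwich: "g \<in> G \<Longrightarrow> (\<lambda>x. c * sw u g v x) \<in> ideal_gen G"
  using ideal_gen.gen[OF _ fin_supp_delta fin_supp_dlt, of g G u c v] sandwich_eq by simp

lemma dlt_sw: "dlt (u @ m @ v) = sw u (dlt m) v"
  by (auto simp: dlt_def sw_def fun_eq_iff)

lemma sw_lin: "sw u (\<lambda>m. c1 * g1 m + c2 * g2 m) v = (\<lambda>x. c1 * sw u g1 v x + c2 * sw u g2 v x)"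
  by (auto simp: sw_def fun_eq_iff)

lemma sw_lin3: "sw u (\<lambda>m. c1 * g1 m + c2 * g2 m + c3 * g3 m) v
   = (\<lambda>x. c1 * sw u g1 v x + c2 * sw u g2 v x + c3 * sw u g3 v x)"
  by (auto simp: sw_def fun_eq_iff)


abbreviation "r1 \<omega> t \<equiv> lc [(1, [Z,X,Y]), (\<omega>, [X,Y,Z]), (\<omega>^2, [Y,Z,X]),
         (t, [Y,X,Z]), (t * \<omega>, [Z,Y,X]), (t * \<omega>^2, [X,Z,Y])]"
abbreviation "r2 \<omega> t \<equiv> lc [(1, [Z,X,Y]), (\<omega>^2, [X,Y,Z]), (\<omega>, [Y,Z,X]),
         (t, [Y,X,Z]), (t * \<omega>^2, [Z,Y,X]), (t * \<omega>, [X,Z,Y])]"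
abbreviation "r3 t \<equiv> lc [(1, [Z,X,Y]), (1, [X,Y,Z]), (1, [Y,Z,X]),
         (t, [Y,X,Z]), (t, [Z,Y,X]), (t, [X,Z,Y])]"

lemma sq_in: "dlt (u @ [a,a] @ v) \<in> ideal_gen (M_rels \<omega> t)"
proof -
  have g: "dlt [a,a] \<in> M_rels \<omega> t"
    by (cases a) (auto simp: M_rels_def lc_def dlt_def fun_eq_iff)
  show ?thesis unfolding dlt_sw using sandwich[OF g, of 1 u v] by simp
qed

lemma comb_in:
  assumes "\<And>m. h m = ca * r1 \<omega> t m + cb * r2 \<omega> t m + cc * r3 t m"
  shows "sw u h v \<in> ideal_gen (M_rels \<omega> t)"
proof -
  have m1: "r1 \<omega> t \<in> M_rels \<omega> t" and m2: "r2 \<omega> t \<in> M_rels \<omega> t" and m3: "r3 t \<in> M_rels \<omega> t"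
    by (auto simp: M_rels_def)
  have "h = (\<lambda>m. ca * r1 \<omega> t m + cb * r2 \<omega> t m + cc * r3 t m)" using assms by auto
  then have e: "sw u h v = (\<lambda>x. ca * sw u (r1 \<omega> t) v x + cb * sw u (r2 \<omega> t) v x + cc * sw u (r3 t) v x)"
    by (simp add: sw_lin3)
  have i12: "(\<lambda>x. ca * sw u (r1 \<omega> t) v x + cb * sw u (r2 \<omega> t) v x) \<in> ideal_gen (M_rels \<omega> t)"
    using ideal_lin[OF sandwich[OF m1, of 1 u v] sandwich[OF m2, of 1 u v], of ca cb] by simp
  have "(\<lambda>x. 1 * (ca * sw u (r1 \<omega> t) v x + cb * sw u (r2 \<omega> t) v x) + cc * sw u (r3 t) v x) \<in> ideal_gen (M_rels \<omega> t)"
    using ideal_lin[OF i12 sandwich[OF m3, of 1 u v], of 1 cc] by simp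
  then show ?thesis unfolding e by simp
qed

lemma binom_in:
  assumes o: "\<omega> ^ 3 = 1" "\<omega> \<noteq> 1"
  shows "(\<lambda>x. dlt (u @ [predg b, b, sucg b] @ v) x + t * dlt (u @ [sucg b, b, predg b] @ v) x)
     \<in> ideal_gen (M_rels \<omega> t)"
proof -
  have o1: "1 + \<omega> + \<omega>^2 = 0" using omega_sum o by blast
  have o3: "\<omega> * \<omega>^2 = 1" "\<omega>^2 * \<omega> = 1" using o(1) by (simp_all add: power2_eq_square power3_eq_cube mult.assoc)
  have o4: "\<omega>^2 * \<omega>^2 = \<omega>"
  proof -
    have "\<omega>^2 * \<omega>^2 = \<omega> * (\<omega> * \<omega>^2)" by (simp add: power2_eq_square)
    then show ?thesis using o3 by simp
  qed
  have "\<omega>^2 = (1 + \<omega> + \<omega>^2) - 1 - \<omega>" by simp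
  then have o2: "\<omega>^2 = - 1 - \<omega>" using o1 by simp
  have o5: "\<omega> * \<omega> = - 1 - \<omega>" using o2 by (simp add: power2_eq_square)
  have o6: "\<And>x. \<omega> * (\<omega> * x) = - x - \<omega> * x" using o5 by (metis mult.assoc mult_minus_left left_diff_distrib mult_1 minus_diff_eq diff_conv_add_uminus)
  define h where "h = (\<lambda>m. dlt [predg b, b, sucg b] m + t * dlt [sucg b, b, predg b] m)"
  have "sw u h v \<in> ideal_gen (M_rels \<omega> t)"
  proof (cases b)
    case X
    show ?thesis
      by (rule comb_in[where ca="1/3" and cb="1/3" and cc="1/3"])
         (auto simp: h_def X dlt_def lc_def o2 o5 o6 field_simps)
  next
    case Y
    show ?thesis
      by (rule comb_in[where ca="\<omega>^2/3" and cb="\<omega>/3" and cc="1/3"])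
         (auto simp: h_def Y dlt_def lc_def o2 o5 o6 field_simps)
  next
    case Z
    show ?thesis
      by (rule comb_in[where ca="\<omega>/3" and cb="\<omega>^2/3" and cc="1/3"])
         (auto simp: h_def Z dlt_def lc_def o2 o5 o6 field_simps)
  qed
  moreover have "sw u h v = (\<lambda>x. dlt (u @ [predg b, b, sucg b] @ v) x + t * dlt (u @ [sucg b, b, predg b] @ v) x)"
    unfolding h_def dlt_sw using sw_lin[of u 1 "dlt [predg b, b, sucg b]" t "dlt [sucg b, b, predg b]" v] by simp
  ultimately show ?thesis by simp
qed


lemma sucg_neq[simp]: "sucg b \<noteq> b" "b \<noteq> sucg b" by (cases b; simp)+
lemma predg_neq[simp]: "predg b \<noteq> b" "b \<noteq> predg b" by (cases b; simp)+
lemma sp_neq[simp]: "sucg b \<noteq> predg b" "predg b \<noteq> sucg b" by (cases b; simp)+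
lemma sp_inv[simp]: "sucg (predg b) = b" "predg (sucg b) = b" by (cases b; simp)+
lemma pp_neq: "predg (predg b) \<noteq> b" by (cases b) auto
lemma predg_inj: "predg a = predg b \<Longrightarrow> a = b" by (cases a; cases b; simp)
lemma third: "x \<noteq> b \<Longrightarrow> x \<noteq> predg b \<Longrightarrow> x = sucg b" by (cases x; cases b; simp)
lemma third3: "(x::gen) \<noteq> b \<Longrightarrow> x \<noteq> e \<Longrightarrow> s \<noteq> b \<Longrightarrow> s \<noteq> e \<Longrightarrow> b \<noteq> e \<Longrightarrow> x = s"
  by (cases x; cases b; cases e; cases s) auto
lemma pair_ps: "(e::gen) \<noteq> b \<Longrightarrow> s \<noteq> b \<Longrightarrow> e \<noteq> s \<Longrightarrow> (e = predg b \<and> s = sucg b) \<or> (e = sucg b \<and> s = predg b)"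
  by (cases e; cases b; cases s; simp)

lemma concat_rep_snoc: "concat (replicate n xs) @ xs = xs @ concat (replicate n xs)"
  by (induction n) auto

context
  fixes \<omega> t :: complex
  assumes om: "\<omega> ^ 3 = 1" "\<omega> \<noteq> 1" and tnz: "t \<noteq> 0"
begin

abbreviation "II \<equiv> ideal_gen (M_rels \<omega> t)"

lemma swap_in1: "dlt (A @ [predg b, b, sucg b] @ B) \<in> II \<longleftrightarrow> dlt (A @ [sucg b, b, predg b] @ B) \<in> II"
proof -
  let ?P = "dlt (A @ [predg b, b, sucg b] @ B)" and ?Q = "dlt (A @ [sucg b, b, predg b] @ B)"
  have bi: "(\<lambda>x. ?P x + t * ?Q x) \<in> II" using binom_in[OF om] by blast
  show ?thesis
  proof
    assume "?P \<in> II"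
    from ideal_lin[OF bi this, of "1/t" "-1/t"] have "(\<lambda>x. 1/t * (?P x + t * ?Q x) + -1/t * ?P x) \<in> II" .
    then show "?Q \<in> II" by (rule ideal_cong) (use tnz in \<open>simp add: field_simps\<close>)
  next
    assume "?Q \<in> II"
    from ideal_lin[OF bi this, of 1 "-t"] have "(\<lambda>x. 1 * (?P x + t * ?Q x) + -t * ?Q x) \<in> II" .
    then show "?P \<in> II" by (rule ideal_cong) simp
  qed
qed

lemma swap_in: "e \<noteq> b \<Longrightarrow> s \<noteq> b \<Longrightarrow> e \<noteq> s \<Longrightarrow> dlt (A @ [e, b, s] @ B) \<in> II \<longleftrightarrow> dlt (A @ [s, b, e] @ B) \<in> II"
  using pair_ps[of e b s] swap_in1[of A b B] by auto

lemma lemD: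
  assumes "e \<noteq> b" "s \<noteq> b" "e \<noteq> s"
  shows "\<forall>A y. dlt (A @ [e] @ concat (replicate (Suc j) [b, s]) @ [e] @ y) \<in> II"
proof (induction j)
  case 0
  show ?case
  proof (intro allI)
    fix A y
    have "dlt ((A @ [s, b]) @ [e, e] @ y) \<in> II" by (rule sq_in)
    moreover have "(A @ [s, b]) @ [e, e] @ y = A @ [s, b, e] @ ([e] @ y)" by simp
    ultimately have "dlt (A @ [s, b, e] @ ([e] @ y)) \<in> II" by simp
    then have "dlt (A @ [e, b, s] @ ([e] @ y)) \<in> II" using swap_in assms by blast
    moreover have "A @ [e, b, s] @ ([e] @ y) = A @ [e] @ concat (replicate (Suc 0) [b, s]) @ [e] @ y" by simp
    ultimately show "dlt (A @ [e] @ concat (replicate (Suc 0) [b, s]) @ [e] @ y) \<in> II" by simp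
  qed
next
  case (Suc j)
  show ?case
  proof (intro allI)
    fix A y
    have "dlt ((A @ [s, b]) @ [e] @ concat (replicate (Suc j) [b, s]) @ [e] @ y) \<in> II" using Suc by blast
    moreover have "(A @ [s, b]) @ [e] @ concat (replicate (Suc j) [b, s]) @ [e] @ y
       = A @ [s, b, e] @ (concat (replicate (Suc j) [b, s]) @ [e] @ y)" by simp
    ultimately have "dlt (A @ [s, b, e] @ (concat (replicate (Suc j) [b, s]) @ [e] @ y)) \<in> II" by simp
    then have "dlt (A @ [e, b, s] @ (concat (replicate (Suc j) [b, s]) @ [e] @ y)) \<in> II" using swap_in assms by blast
    moreover have "A @ [e, b, s] @ (concat (replicate (Suc j) [b, s]) @ [e] @ y)
       = A @ [e] @ concat (replicate (Suc (Suc j)) [b, s]) @ [e] @ y" by simp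
    ultimately show "dlt (A @ [e] @ concat (replicate (Suc (Suc j)) [b, s]) @ [e] @ y) \<in> II" by simp
  qed
qed

end

lemma lemE:
  assumes "pat b q w" "w \<noteq> []" "last w = s" "s \<noteq> b" "e \<in> set w" "e \<noteq> b" "e \<noteq> s"
  shows "\<exists>A j. w = A @ [e] @ concat (replicate (Suc j) [b, s])"
  using assms
proof (induction "length w" arbitrary: w rule: less_induct)
  case less
  obtain w1 where w1: "w = w1 @ [s]" using less(3,4) by (metis append_butlast_last_id)
  have p1: "pat b q w1" and ev1: "even (length w1) \<noteq> q" using less(2) less(5) unfolding w1 pat_snoc by auto
  have e1: "e \<in> set w1" using less(6,8) w1 by auto
  then have "w1 \<noteq> []" by auto
  then obtain w2 x where w2: "w1 = w2 @ [x]" by (metis append_butlast_last_id)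
  have p2: "pat b q w2" and x: "x = b" using p1 ev1 unfolding w2 pat_snoc by auto
  have e2: "e \<in> set w2" using e1 less(7) w2 x by auto
  then have "w2 \<noteq> []" by auto
  then obtain w3 x2 where w3: "w2 = w3 @ [x2]" by (metis append_butlast_last_id)
  have p3: "pat b q w3" and x2: "x2 \<noteq> b" using p2 ev1 unfolding w3 w2 pat_snoc by auto
  show ?case
  proof (cases "x2 = e")
    case True
    then have "w = w3 @ [e] @ concat (replicate (Suc 0) [b, s])" using w1 w2 w3 x by simp
    then show ?thesis by blast
  next
    case False
    then have "x2 = s" using third3[OF x2 False less(5)] less(8,7) by metis
    then obtain A j where Aj: "w2 = A @ [e] @ concat (replicate (Suc j) [b, s])"
      using less(1)[of w2] p2 e2 less(5,7,8) w1 w2 w3 by force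
    have "w = A @ [e] @ (concat (replicate (Suc j) [b, s]) @ [b, s])" using w1 w2 x Aj by simp
    also have "\<dots> = A @ [e] @ concat (replicate (Suc (Suc j)) [b, s])"
      by (simp only: concat_rep_snoc) simp
    finally show ?thesis by blast
  qed
qed


lemma adj:
  assumes "pat b q w" "0 < invs (sucg b) (predg b) w"
  shows "\<exists>u v. w = u @ [sucg b, b, predg b] @ v"
  using assms
proof (induction w arbitrary: q)
  case Nil then show ?case by simp
next
  case (Cons x xs)
  show ?case
  proof (cases "0 < invs (sucg b) (predg b) xs")
    case True
    have "pat b (\<not> q) xs" using Cons(2) by simp
    then obtain u v where "xs = u @ [sucg b, b, predg b] @ v" using Cons.IH True by blast
    then have "x # xs = (x # u) @ [sucg b, b, predg b] @ v" by simp
    then show ?thesis by blast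
  next
    case False
    then have i0: "invs (sucg b) (predg b) xs = 0" by simp
    then have xs: "x = sucg b" "0 < count_list xs (predg b)" using Cons(3) by (auto split: if_splits)
    then have q: "\<not> q" "pat b True xs" using Cons(2) by auto
    then obtain xs1 where xs1: "xs = b # xs1" "pat b False xs1"
      using xs(2) by (cases xs) auto
    then obtain y zs where yz: "xs1 = y # zs" using xs(2) by (cases xs1) auto
    have yb: "y \<noteq> b" using xs1(2) yz by simp
    show ?thesis
    proof (cases "y = predg b")
      case True
      then have "x # xs = [] @ [sucg b, b, predg b] @ zs" using xs xs1 yz by simp
      then show ?thesis by blast
    next
      case False
      then have "y = sucg b" using third yb by blast
      then have "invs (sucg b) (predg b) xs = count_list zs (predg b) + invs (sucg b) (predg b) zs"
        using xs1 yz by simp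
      moreover have "count_list xs (predg b) = count_list zs (predg b)" using xs1 yz False by simp
      ultimately show ?thesis using i0 xs(2) by simp
    qed
  qed
qed

lemma zero_rep:
  assumes "pat b q w" "invs (sucg b) (predg b) w = 0"
  shows "w = rep b q (count_list w (predg b)) (length w)"
  using assms
proof (induction w arbitrary: q)
  case Nil then show ?case by simp
next
  case (Cons x xs)
  show ?case
  proof (cases q)
    case True
    then have "x = b" using Cons by simp
    then show ?thesis using Cons True by simp
  next
    case False
    then have xb: "x \<noteq> b" using Cons by simp
    show ?thesis
    proof (cases "x = predg b")
      case True
      then show ?thesis using Cons False by simp
    next
      case f2: False
      then have "x = sucg b" using third xb by blast
      then show ?thesis using Cons False by (auto split: if_splits)
    qed
  qed
qed

context
  fixes \<omega> t :: complex
  assumes om: "\<omega> ^ 3 = 1" "\<omega> \<noteq> 1" and tnz: "t \<noteq> 0"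
begin

lemma B1: "(\<exists>b q. pat b q w) \<or> (\<forall>y. dlt (w @ y) \<in> ideal_gen (M_rels \<omega> t))"
proof (induction w rule: rev_induct)
  case Nil
  have "pat X True []" by simp
  then show ?case by blast
next
  case (snoc e w)
  show ?case
  proof (cases "\<forall>y. dlt (w @ y) \<in> ideal_gen (M_rels \<omega> t)")
    case True
    have "\<forall>y. dlt ((w @ [e]) @ y) \<in> ideal_gen (M_rels \<omega> t)"
    proof
      fix y
      show "dlt ((w @ [e]) @ y) \<in> ideal_gen (M_rels \<omega> t)" using True[rule_format, of "[e] @ y"] by simp
    qed
    then show ?thesis by blast
  next
    case False
    then obtain b q where p: "pat b q w" using snoc by blast
    show ?thesis
    proof (cases "(e = b) = (even (length w) = q)")
      case True
      then have "pat b q (w @ [e])" using p pat_snoc by blast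
      then show ?thesis by blast
    next
      case nf: False
      show ?thesis
      proof (cases "w = []")
        case True
        have "pat e True (w @ [e])" using True by simp
        then show ?thesis by blast
      next
        case False
        then obtain w0 x where w0: "w = w0 @ [x]" by (metis append_butlast_last_id)
        have xb: "(x = b) = (even (length w0) = q)" using p unfolding w0 pat_snoc by simp
        have lw: "length w = Suc (length w0)" using w0 by simp
        show ?thesis
        proof (cases "\<exists>b q. pat b q (w @ [e])")
          case True then show ?thesis by blast
        next
          case notlive: False
        have "\<forall>y. dlt ((w @ [e]) @ y) \<in> ideal_gen (M_rels \<omega> t)"
        proof
          fix y
          show "dlt ((w @ [e]) @ y) \<in> ideal_gen (M_rels \<omega> t)"
          proof (cases "even (length w) = q")
            case False
            then have "e = b" "x = b" using nf xb lw by auto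
            then have "(w @ [e]) @ y = w0 @ [b, b] @ y" using w0 by simp
            then show ?thesis using sq_in by simp
          next
            case True
            then have eb: "e \<noteq> b" and xb': "x \<noteq> b" using nf xb lw by auto
            show ?thesis
            proof (cases "e = x")
              case True
              then have "(w @ [e]) @ y = w0 @ [x, x] @ y" using w0 by simp
              then show ?thesis using sq_in by simp
            next
              case ex: False
              show ?thesis
              proof (cases "e \<in> set w")
                case True
                obtain A j where Aj: "w = A @ [e] @ concat (replicate (Suc j) [b, x])"
                  using lemE[OF p \<open>w \<noteq> []\<close> _ xb' True eb ex] w0 by auto
                then have "(w @ [e]) @ y = A @ [e] @ concat (replicate (Suc j) [b, x]) @ [e] @ y" by simp
                then show ?thesis using lemD[OF om tnz eb xb' ex] by simp
              next
                case nin: False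
                have "pat x (\<not> q) w"
                  unfolding pat_nth
                proof (intro allI impI)
                  fix i assume i: "i < length w"
                  have wi: "(w ! i = b) = (even i = q)" using p i unfolding pat_nth by blast
                  have "w ! i \<noteq> e" using nin i by (metis nth_mem)
                  then have "w ! i \<noteq> b \<Longrightarrow> w ! i = x" using third3[of "w ! i" b e x] xb' ex eb by metis
                  moreover have "w ! i = b \<Longrightarrow> w ! i \<noteq> x" using xb' by simp
                  ultimately show "(w ! i = x) = (even i = (\<not> q))" using wi by auto
                qed
                then have "pat x (\<not> q) (w @ [e])" using True ex by (simp add: pat_snoc)
                then have False using notlive by blast
                then show ?thesis by blast
              qed
            qed
          qed
        qed
        then show ?thesis by blast
        qed
      qed
    qed
  qed
qed

end

lemma count_pos: "x \<in> set w \<Longrightarrow> 0 < count_list w x"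
  by (induction w) auto

lemma good_pattern:
  assumes "pat b q w" "w \<noteq> []"
  shows "\<exists>b' q'. pat b' q' w \<and> predg b' \<in> set w"
proof (cases "predg b \<in> set w")
  case True then show ?thesis using assms by blast
next
  case nin: False
  show ?thesis
  proof (cases "length w = 1")
    case True
    then obtain x where w: "w = [x]" by (metis length_0_conv length_Suc_conv One_nat_def)
    have "pat (sucg x) False w \<and> predg (sucg x) \<in> set w" using w by simp
    then show ?thesis by blast
  next
    case False
    then have l2: "2 \<le> length w" using assms(2) by (cases w) (auto simp: Suc_le_eq)
    have pw: "\<And>i. i < length w \<Longrightarrow> (w ! i = b) = (even i = q)" using assms(1) unfolding pat_nth by blast
    have "pat (sucg b) (\<not> q) w"
      unfolding pat_nth
    proof (intro allI impI)
      fix i assume i: "i < length w"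
      have "w ! i \<noteq> predg b" using nin i by (metis nth_mem)
      then show "(w ! i = sucg b) = (even i = (\<not> q))" using pw[OF i] third[of "w ! i" b] by auto
    qed
    moreover have "b \<in> set w"
    proof (cases q)
      case True
      then have "w ! 0 = b" using pw[of 0] l2 assms(2) by simp
      then show ?thesis using l2 by (metis nth_mem less_le_trans zero_less_numeral)
    next
      case False
      then have "w ! 1 = b" using pw[of 1] l2 by simp
      then show ?thesis using l2 by (metis nth_mem less_le_trans one_less_numeral_iff semiring_norm(76))
    qed
    ultimately show ?thesis by (metis sp_inv(2))
  qed
qed

lemma pattern_unique:
  assumes "pat b q w" "predg b \<in> set w" "pat b' q' w" "predg b' \<in> set w"
  shows "b = b' \<and> q = q'"
proof -
  have pw: "\<And>i. i < length w \<Longrightarrow> (w ! i = b) = (even i = q)" using assms(1) unfolding pat_nth by blast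
  have pw': "\<And>i. i < length w \<Longrightarrow> (w ! i = b') = (even i = q')" using assms(3) unfolding pat_nth by blast
  obtain i where i: "i < length w" "w ! i = predg b" using assms(2) by (metis in_set_conv_nth)
  obtain i' where i': "i' < length w" "w ! i' = predg b'" using assms(4) by (metis in_set_conv_nth)
  show ?thesis
  proof (cases "q = q'")
    case True
    have "b = b'"
    proof (cases "\<exists>j<length w. even j = q")
      case True
      then obtain j where "j < length w" "even j = q" by blast
      then show ?thesis using pw pw' \<open>q = q'\<close> by metis
    next
      case False
      have "w ! i \<noteq> b'" using pw'[OF i(1)] False i(1) \<open>q = q'\<close> by blast
      have "even i \<noteq> q" "even i' \<noteq> q" using False i i' by auto
      have "length w = 1"
      proof (rule ccontr)
        assume "length w \<noteq> 1"
        then have "0 < length w" "1 < length w" using i by auto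
        then show False using False by (metis odd_one even_zero)
      qed
      then have "i = 0" "i' = 0" using i i' by auto
      then show ?thesis using i i' predg_inj by metis
    qed
    then show ?thesis using True by simp
  next
    case False
    have ab: "\<And>j. j < length w \<Longrightarrow> w ! j = b \<or> w ! j = b'" using pw pw' False by blast
    have "b \<noteq> b'" using pw pw' False i(1) by blast
    have "predg b = b'" using ab[OF i(1)] i(2) by (metis predg_neq(1))
    moreover have "predg b' = b" using ab[OF i'(1)] i'(2) by (metis predg_neq(1))
    ultimately show ?thesis using pp_neq by metis
  qed
qed

context
  fixes \<omega> t :: complex
  assumes om: "\<omega> ^ 3 = 1" "\<omega> \<noteq> 1" and tnz: "t \<noteq> 0"
begin

lemma B2_aux:
  "\<forall>w. invs (sucg b) (predg b) w = n \<longrightarrow> pat b q w \<longrightarrow>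
     (\<lambda>x. dlt (w @ y) x - (- 1 / t) ^ n * dlt (rep b q (count_list w (predg b)) (length w) @ y) x)
       \<in> ideal_gen (M_rels \<omega> t)"
proof (induction n)
  case 0
  show ?case
  proof (intro allI impI)
    fix w assume a: "invs (sucg b) (predg b) w = 0" "pat b q w"
    have "w = rep b q (count_list w (predg b)) (length w)" using zero_rep a by blast
    then have "(\<lambda>x. dlt (w @ y) x - (- 1 / t) ^ 0 * dlt (rep b q (count_list w (predg b)) (length w) @ y) x) = (\<lambda>_. 0)"
      by (metis (no_types) diff_self mult_1 power_0)
    then show "(\<lambda>x. dlt (w @ y) x - (- 1 / t) ^ 0 * dlt (rep b q (count_list w (predg b)) (length w) @ y) x)
       \<in> ideal_gen (M_rels \<omega> t)" using ideal_gen.zero by simp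
  qed
next
  case (Suc m)
  show ?case
  proof (intro allI impI)
    fix w assume a: "invs (sucg b) (predg b) w = Suc m" "pat b q w"
    obtain u v where w: "w = u @ [sucg b, b, predg b] @ v" using adj[OF a(2)] a(1) by auto
    define w' where "w' = u @ [predg b, b, sucg b] @ v"
    have pw': "pat b q w'" using a(2) unfolding w w'_def by (auto simp: pat_append split: if_splits)
    have cw: "count_list w' (predg b) = count_list w (predg b)" "length w' = length w"
      unfolding w w'_def by simp_all
    have iw: "invs (sucg b) (predg b) w' = m" using a(1) unfolding w w'_def by (simp add: invs_append)
    define R where "R = rep b q (count_list w (predg b)) (length w) @ y"
    have IH: "(\<lambda>x. dlt (w' @ y) x - (- 1 / t) ^ m * dlt R x) \<in> ideal_gen (M_rels \<omega> t)"
      using Suc iw pw' cw unfolding R_def by metis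
    have bi: "(\<lambda>x. dlt (u @ [predg b, b, sucg b] @ (v @ y)) x + t * dlt (u @ [sucg b, b, predg b] @ (v @ y)) x)
       \<in> ideal_gen (M_rels \<omega> t)" using binom_in[OF om] by blast
    have "(\<lambda>x. 1/t * (dlt (u @ [predg b, b, sucg b] @ (v @ y)) x + t * dlt (u @ [sucg b, b, predg b] @ (v @ y)) x)
        + (-1/t) * (dlt (w' @ y) x - (- 1 / t) ^ m * dlt R x)) \<in> ideal_gen (M_rels \<omega> t)"
      by (rule ideal_lin[OF bi IH])
    then show "(\<lambda>x. dlt (w @ y) x - (- 1 / t) ^ Suc m * dlt (rep b q (count_list w (predg b)) (length w) @ y) x)
       \<in> ideal_gen (M_rels \<omega> t)"
      by (rule ideal_cong) (use tnz in \<open>simp add: w w'_def R_def field_simps\<close>)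
  qed
qed

lemma B2: "pat b q w \<Longrightarrow>
     (\<lambda>x. dlt (w @ y) x - (- 1 / t) ^ invs (sucg b) (predg b) w * dlt (rep b q (count_list w (predg b)) (length w) @ y) x)
       \<in> ideal_gen (M_rels \<omega> t)"
  using B2_aux by blast

definition KK :: "nat \<Rightarrow> (gen \<times> bool \<times> nat) set" where
  "KK n = {X, Y, Z} \<times> {True, False} \<times> {1..n}"

lemma finite_KK: "finite (KK n)" by (simp add: KK_def)

lemma gen_in: "(b::gen) \<in> {X, Y, Z}" by (cases b) auto

lemma per_word:
  assumes "w \<noteq> []"
  shows "(\<lambda>x. dlt w x - (\<Sum>(b, q, k)\<in>KK (length w). lam t b q k w * dlt (rep b q k (length w)) x))
    \<in> ideal_gen (M_rels \<omega> t)"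
proof (cases "\<exists>b q. pat b q w")
  case False
  then have "\<forall>y. dlt (w @ y) \<in> ideal_gen (M_rels \<omega> t)" using B1[OF om tnz, of w] by blast
  then have d: "dlt w \<in> ideal_gen (M_rels \<omega> t)" by (metis append_Nil2)
  have "\<And>b q k. lam t b q k w = 0" using False by (simp add: lam_def)
  then show ?thesis using d by (simp add: case_prod_beta)
next
  case True
  then obtain b q where p: "pat b q w" by blast
  obtain b0 q0 where p0: "pat b0 q0 w" "predg b0 \<in> set w" using good_pattern[OF p assms] by blast
  define k0 where "k0 = count_list w (predg b0)"
  have k0: "1 \<le> k0" "k0 \<le> length w" using p0(2) unfolding k0_def
    by (simp_all add: Suc_le_eq count_pos count_le_length)
  have mem: "(b0, q0, k0) \<in> KK (length w)" using k0 gen_in by (simp add: KK_def)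
  have z: "\<And>c. c \<in> KK (length w) \<Longrightarrow> c \<noteq> (b0, q0, k0) \<Longrightarrow> (\<lambda>(b, q, k). lam t b q k w * dlt (rep b q k (length w)) x) c = 0" for x
  proof -
    fix c assume c: "c \<in> KK (length w)" "c \<noteq> (b0, q0, k0)"
    obtain b q k where cc: "c = (b, q, k)" by (metis prod_cases3)
    have "lam t b q k w = 0"
    proof (rule ccontr)
      assume "lam t b q k w \<noteq> 0"
      then have pq: "pat b q w" "count_list w (predg b) = k" by (auto simp: lam_def split: if_splits)
      have "1 \<le> k" using c cc by (simp add: KK_def)
      then have "predg b \<in> set w" using pq(2) by (metis count_notin not_one_le_zero)
      then have "b = b0" "q = q0" using pattern_unique[OF pq(1) _ p0] by auto
      then show False using c cc pq(2) k0_def by simp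
    qed
    then show "(\<lambda>(b, q, k). lam t b q k w * dlt (rep b q k (length w)) x) c = 0" using cc by simp
  qed
  have s: "\<And>x. (\<Sum>(b, q, k)\<in>KK (length w). lam t b q k w * dlt (rep b q k (length w)) x)
     = lam t b0 q0 k0 w * dlt (rep b0 q0 k0 (length w)) x"
  proof -
    fix x
    have "(\<Sum>c\<in>KK (length w) - {(b0, q0, k0)}. (\<lambda>(b, q, k). lam t b q k w * dlt (rep b q k (length w)) x) c) = 0"
      by (rule sum.neutral) (use z in blast)
    then show "(\<Sum>(b, q, k)\<in>KK (length w). lam t b q k w * dlt (rep b q k (length w)) x)
     = lam t b0 q0 k0 w * dlt (rep b0 q0 k0 (length w)) x"
      using sum.remove[OF finite_KK mem, of "\<lambda>(b, q, k). lam t b q k w * dlt (rep b q k (length w)) x"] by simp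
  qed
  have l: "lam t b0 q0 k0 w = (- 1 / t) ^ invs (sucg b0) (predg b0) w" using p0 by (simp add: lam_def k0_def)
  show ?thesis unfolding s l using B2[OF p0(1), of "[]"] by (simp add: k0_def)
qed

end

lemma Phi_diff: "fin_supp p \<Longrightarrow> fin_supp q \<Longrightarrow> Phi l (ncdiff p q) = Phi l p - Phi l q"
proof -
  assume a: "fin_supp p" "fin_supp q"
  let ?S = "supp p \<union> supp q"
  have f: "finite ?S" using a by (simp add: fin_supp_supp)
  have "Phi l (ncdiff p q) = (\<Sum>w\<in>?S. l w * ncdiff p q w)"
    by (rule Phi_superset[OF f]) (auto simp: supp_def ncdiff_def)
  also have "\<dots> = (\<Sum>w\<in>?S. l w * p w) - (\<Sum>w\<in>?S. l w * q w)"
    by (simp add: ncdiff_def right_diff_distrib sum_subtractf)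
  also have "\<dots> = Phi l p - Phi l q"
    using Phi_superset[OF f, of p l] Phi_superset[OF f, of q l] by auto
  finally show ?thesis .
qed

lemma Phi_cong: "(\<And>w. w \<in> supp f \<Longrightarrow> l1 w = l2 w) \<Longrightarrow> Phi l1 f = Phi l2 f"
  unfolding Phi_def by (rule sum.cong) auto

lemma supp_dlt: "supp (dlt u) = {u}" by (auto simp: supp_def dlt_def)

lemma Phi_right_letter: "fin_supp f \<Longrightarrow> Phi l (ncmul f (dlt [e])) = Phi (\<lambda>u. l (u @ [e])) f"
  by (simp add: Phi_ncmul_right fin_supp_dlt supp_dlt) (simp add: dlt_def)

lemma Phi_left_letter: "fin_supp f \<Longrightarrow> Phi l (ncmul (dlt [e]) f) = Phi (\<lambda>v. l (e # v)) f"
  by (simp add: Phi_ncmul_left fin_supp_dlt supp_dlt) (simp add: dlt_def)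

context
  fixes \<omega> t :: complex
  assumes om: "\<omega> ^ 3 = 1" "\<omega> \<noteq> 1" and tnz: "t \<noteq> 0"
begin

lemma center_zero:
  assumes od: "odd n" and hf: "fin_supp f" and len: "\<And>w. f w \<noteq> 0 \<Longrightarrow> length w = n"
    and cm: "central_mod (ideal_gen (M_rels \<omega> t)) f"
  shows "Phi (lam t b q k) f = 0"
proof -
  have killed: "\<And>e. Phi (lam t b True k) (ncdiff (ncmul f (dlt [e])) (ncmul (dlt [e]) f)) = 0"
  proof -
    fix e
    have "ncdiff (ncmul f (dlt [e])) (ncmul (dlt [e]) f) \<in> ideal_gen (M_rels \<omega> t)"
      using cm fin_supp_dlt unfolding central_mod_def by blast
    then show "Phi (lam t b True k) (ncdiff (ncmul f (dlt [e])) (ncmul (dlt [e]) f)) = 0"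
      using Phi_ideal[OF om lam_good[OF tnz]] by blast
  qed
  have eq: "\<And>e. Phi (\<lambda>u. lam t b True k (u @ [e])) f = Phi (\<lambda>v. lam t b True k (e # v)) f"
  proof -
    fix e
    show "Phi (\<lambda>u. lam t b True k (u @ [e])) f = Phi (\<lambda>v. lam t b True k (e # v)) f"
      using killed[of e] by (simp add: Phi_diff fin_supp_ncmul hf fin_supp_dlt Phi_right_letter Phi_left_letter)
  qed
  have ln: "\<And>w. w \<in> supp f \<Longrightarrow> length w = n" using len by (simp add: supp_def)
  show ?thesis
  proof (cases q)
    case False
    have "Phi (\<lambda>u. lam t b True k (u @ [b])) f = Phi (\<lambda>_. 0) f"
      by (rule Phi_cong) (use ln od in \<open>auto simp: lam_def pat_snoc\<close>)
    moreover have "Phi (\<lambda>v. lam t b True k (b # v)) f = Phi (lam t b False k) f"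
      by (rule Phi_cong) (simp add: lam_def)
    ultimately show ?thesis using eq[of b] False by (simp add: Phi_def)
  next
    case True
    have "Phi (\<lambda>u. lam t b True k (u @ [sucg b])) f = Phi (lam t b True k) f"
      by (rule Phi_cong) (use ln od in \<open>auto simp: lam_def pat_snoc invs_append\<close>)
    moreover have "Phi (\<lambda>v. lam t b True k (sucg b # v)) f = Phi (\<lambda>_. 0) f"
      by (rule Phi_cong) (simp add: lam_def)
    ultimately show ?thesis using eq[of "sucg b"] True by (simp add: Phi_def)
  qed
qed

lemma assemble:
  assumes hf: "fin_supp f" and len: "\<And>w. f w \<noteq> 0 \<Longrightarrow> length w = n" and n1: "1 \<le> n"
    and ph: "\<And>b q k. Phi (lam t b q k) f = 0"
  shows "f \<in> ideal_gen (M_rels \<omega> t)"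
proof -
  let ?S = "supp f"
  define H where "H c = (case c of (b, q, k) \<Rightarrow> lam t b q k)" for c
  define D where "D c = (case c of (b, q, k) \<Rightarrow> dlt (rep b q k n))" for c
  have fS: "finite ?S" using hf by (simp add: fin_supp_supp)
  have phH: "\<And>c. Phi (H c) f = 0" unfolding H_def using ph by (simp add: case_prod_beta)
  define G where "G w = (\<lambda>x. dlt w x - (\<Sum>c\<in>KK n. H c w * D c x))" for w
  have G: "\<And>w. w \<in> ?S \<Longrightarrow> G w \<in> ideal_gen (M_rels \<omega> t)"
  proof -
    fix w assume w: "w \<in> ?S"
    then have lw: "length w = n" using len by (simp add: supp_def)
    then have "w \<noteq> []" using n1 by auto
    then have "(\<lambda>x. dlt w x - (\<Sum>(b, q, k)\<in>KK (length w). lam t b q k w * dlt (rep b q k (length w)) x))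
      \<in> ideal_gen (M_rels \<omega> t)" by (rule per_word[OF om tnz])
    moreover have "\<And>x. (\<Sum>(b, q, k)\<in>KK (length w). lam t b q k w * dlt (rep b q k (length w)) x)
        = (\<Sum>c\<in>KK n. H c w * D c x)"
      unfolding H_def D_def lw by (rule sum.cong) auto
    ultimately show "G w \<in> ideal_gen (M_rels \<omega> t)" unfolding G_def by simp
  qed
  have "(\<lambda>x. \<Sum>w\<in>?S. (\<lambda>x. f w * G w x) x) \<in> ideal_gen (M_rels \<omega> t)"
    by (rule ideal_sum[OF fS]) (rule ideal_scale[OF G])
  then show ?thesis
  proof (rule ideal_cong)
    fix x
    have d: "(\<Sum>w\<in>?S. f w * dlt w x) = f x"
    proof (cases "x \<in> ?S")
      case True
      have "(\<Sum>w\<in>?S. f w * dlt w x) = (\<Sum>w\<in>?S. if w = x then f x else 0)"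
        by (rule sum.cong) (auto simp: dlt_def)
      also have "\<dots> = f x" using True fS by (simp add: sum.delta')
      finally show ?thesis .
    next
      case False
      then have "f x = 0" by (simp add: supp_def)
      moreover have "(\<Sum>w\<in>?S. f w * dlt w x) = 0"
        by (rule sum.neutral) (use False in \<open>auto simp: dlt_def\<close>)
      ultimately show ?thesis by simp
    qed
    have z: "(\<Sum>w\<in>?S. f w * (\<Sum>c\<in>KK n. H c w * D c x)) = 0"
    proof -
      have "(\<Sum>w\<in>?S. f w * (\<Sum>c\<in>KK n. H c w * D c x)) = (\<Sum>w\<in>?S. \<Sum>c\<in>KK n. f w * (H c w * D c x))"
        by (simp only: sum_distrib_left)
      also have "\<dots> = (\<Sum>c\<in>KK n. \<Sum>w\<in>?S. f w * (H c w * D c x))"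
        by (rule sum.swap)
      also have "\<dots> = (\<Sum>c\<in>KK n. Phi (H c) f * D c x)"
      proof (rule sum.cong[OF refl])
        fix c
        have "(\<Sum>w\<in>?S. f w * (H c w * D c x)) = (\<Sum>w\<in>?S. H c w * f w) * D c x"
          by (simp only: sum_distrib_right) (simp only: mult.commute mult.left_commute)
        then show "(\<Sum>w\<in>?S. f w * (H c w * D c x)) = Phi (H c) f * D c x" by (simp only: Phi_def)
      qed
      also have "\<dots> = 0" by (simp add: phH)
      finally show ?thesis .
    qed
    have "(\<Sum>w\<in>?S. f w * G w x) = (\<Sum>w\<in>?S. f w * dlt w x)
        - (\<Sum>w\<in>?S. f w * (\<Sum>c\<in>KK n. H c w * D c x))"
      unfolding G_def by (simp only: right_diff_distrib sum_subtractf)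
    then show "f x = (\<Sum>w\<in>?S. f w * G w x)" using d z by simp
  qed
qed

end

theorem mainTheorem11:
  fixes \<omega> t :: complex
  assumes "\<omega> ^ 3 = 1" and "\<omega> \<noteq> 1" and "t \<noteq> 0"
  shows "\<forall>d f. odd d \<and> homogeneous d f \<and> central_mod (M_ideal \<omega> t) f
           \<longrightarrow> f \<in> M_ideal \<omega> t"
proof (intro allI impI)
  fix d f assume a: "odd d \<and> homogeneous d f \<and> central_mod (M_ideal \<omega> t) f"
  have hf: "fin_supp f" and len: "\<And>w. f w \<noteq> 0 \<Longrightarrow> length w = d"
    using a by (auto simp: homogeneous_def)
  have cm: "central_mod (ideal_gen (M_rels \<omega> t)) f" using a by (simp add: M_ideal_def)
  have d1: "1 \<le> d" using a by (cases d) auto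
  have "\<And>b q k. Phi (lam t b q k) f = 0"
    using center_zero[OF assms, of d f] a hf len cm by blast
  then have "f \<in> ideal_gen (M_rels \<omega> t)"
    using assemble[OF assms hf len d1] by blast
  then show "f \<in> M_ideal \<omega> t" by (simp add: M_ideal_def)
qed

end
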